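(* Let $d,n\ge 1$, $\lambda>0$, $0<\kappa\le 1$, and let $u\in H^{2}_{\mathrm{mix}}$ on $[0,1]^d$ satisfy the standing facts below. Let $I_n:=\{i\in\mathbb{N}^d:\|i\|_1\le n\}$ and let $u_i$ ($i\in I_n$) be the piecewise $d$-linear interpolant of $u$ on the grid $\Omega_i$. Let $t_n\ge 0$ and for each $i$ with $\|i\|_1=n$ let $t_i\in[0,t_n]$. Let $(U_i)_{i\in I_n}$ be $\{0,1\}$-valued random variables with $U_i=0$ almost surely if $\|i\|_1<n$ and $\Pr(U_i=1)=G(t_i)$ if $\|i\|_1=n$, where $G(t)=\frac{1}{\lambda\Gamma(1+1/\kappa)}\int_0^t e^{-(x/\lambda)^\kappa}dx$. Let $I'=\{i\in I_n: U_i=0\}$ (a random set) and let $u^{\mathrm{gcp}}_{I'}=\sum_{i\in I'}c_iu_i$, where $(c_i)_{i\in I'}$ is the (unique) solution of the general coefficient problem for $I'$. Then $$\mathbb{E}\left[\|u-u^{\mathrm{gcp}}_{I'}\|_{2}\right]\le \epsilon_n\left(1+3\left(1-e^{-(t_n/\lambda)^{\kappa}}\right)\right).$$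
   Context: Notation: for $i\in\mathbb{N}$, $\Omega_i=\{k2^{-i}:k=0,\dots,2^i\}$; for $i\in\mathbb{N}^d$, $\Omega_i=\Omega_{i_1}\times\cdots\times\Omega_{i_d}\subset[0,1]^d$. For multi-indices, $i\le j$ means $i_k\le j_k$ for all $k$, $\|i\|_1=\sum_k i_k$, and $I{\downarrow}:=\{i:\exists j\in I,\ i\le j\}$. $\|\cdot\|_2$ is the $L^2([0,1]^d)$ norm. Hierarchical surpluses: for $j\in\mathbb{N}^d$, $h_j:=\sum_{S\subseteq\{1,\dots,d\}}(-1)^{|S|}u_{j-e_S}$, where $e_S=\sum_{k\in S}e^k$ ($e^k$ the $k$-th unit multi-index) and $u_m:=0$ if some $m_k<0$; so $u_i=\sum_{j\le i}h_j$. Seminorm: $|u|_{H^2_{\mathrm{mix}}}:=\left\|\frac{\partial^{2d}u}{\partial x_1^2\cdots\partial x_d^2}\right\|_2$. Standing facts (taken as given for $u\in H^2_{\mathrm{mix}}$): $u=\sum_{j\in\mathbb{N}^d}h_j$ with convergence in $L^2$, and $\|h_j\|_2\le 3^{-d}4^{-\|j\|_1}|u|_{H^2_{\mathrm{mix}}}$ for all $j$. Define $$\epsilon_n:=\tfrac13\,3^{-d}\,2^{-2n}\,|u|_{H^2_{\mathrm{mix}}}\sum_{k=0}^{d-1}\binom{n+d}{k}\left(\tfrac13\right)^{d-1-k},$$ which equals $3^{-d}|u|_{H^2_{\mathrm{mix}}}\sum_{k=n+1}^{\infty}4^{-k}\binom{k+d-1}{d-1}$. General coefficient problem (GCP) for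 a finite $I\subset\mathbb{N}^d$: for real $(c_i)_{i\in I}$ set $w_i:=\sum_{j\in I,\,j\ge i}c_j$ for $i\in I{\downarrow}$; among all families with $w_i\in\{0,1\}$ for all $i\in I{\downarrow}$, maximise $Q'(w)=\sum_{i\in I{\downarrow}}4^{-\|i\|_1}w_i$. (Here $I'$ is always a downset, for which the GCP solution is unique with $w_i=1$ on $I'$.) $G$ is the random-incidence distribution function of a Weibull renewal process with scale $\lambda$ and shape $\kappa$, modelling the probability that the computation of $u_i$ (taking time $t_i$ on one node) is interrupted by a fault; solutions with $\|i\|_1<n$ are recomputed on failure and hence always available. *)

theory Defs
  imports "HOL-Probability.Probability"
begin

text \<open>Multi-indices in N^d are functions 'd => nat with 'd a finite type, d = CARD('d).
  The order on multi-indices is the pointwise order on functions.\<close>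

definition norm1 :: "('d::finite \<Rightarrow> nat) \<Rightarrow> nat" where
  "norm1 i = (\<Sum>k\<in>UNIV. i k)"

definition downset :: "('d::finite \<Rightarrow> nat) set \<Rightarrow> ('d \<Rightarrow> nat) set" where
  "downset I = {i. \<exists>j\<in>I. i \<le> j}"

text \<open>Hierarchical surplus h_j = sum over S of (-1)^|S| u_(j - e_S), with u_m = 0 when
  some component of m is negative (so only S inside the support of j contribute).\<close>
definition surplus :: "(('d::finite \<Rightarrow> nat) \<Rightarrow> 'v::real_vector) \<Rightarrow> ('d \<Rightarrow> nat) \<Rightarrow> 'v" where
  "surplus uu j = (\<Sum>S\<in>{S. S \<subseteq> {k. 0 < j k}}.
      ((-1::real) ^ card S) *\<^sub>R uu (\<lambda>k. if k \<in> S then j k - 1 else j k))"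

definition gcp_w :: "('d::finite \<Rightarrow> nat) set \<Rightarrow> (('d \<Rightarrow> nat) \<Rightarrow> real) \<Rightarrow> ('d \<Rightarrow> nat) \<Rightarrow> real" where
  "gcp_w I c i = (\<Sum>j\<in>{j\<in>I. i \<le> j}. c j)"

definition gcp_Q :: "('d::finite \<Rightarrow> nat) set \<Rightarrow> (('d \<Rightarrow> nat) \<Rightarrow> real) \<Rightarrow> real" where
  "gcp_Q I c = (\<Sum>i\<in>downset I. (1/4::real) ^ norm1 i * gcp_w I c i)"

definition gcp_feasible :: "('d::finite \<Rightarrow> nat) set \<Rightarrow> (('d \<Rightarrow> nat) \<Rightarrow> real) \<Rightarrow> bool" where
  "gcp_feasible I c \<longleftrightarrow> (\<forall>j. j \<notin> I \<longrightarrow> c j = 0) \<and> (\<forall>i\<in>downset I. gcp_w I c i \<in> {0, 1})"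

definition gcp_solution :: "('d::finite \<Rightarrow> nat) set \<Rightarrow> (('d \<Rightarrow> nat) \<Rightarrow> real) \<Rightarrow> bool" where
  "gcp_solution I c \<longleftrightarrow> gcp_feasible I c \<and> (\<forall>c'. gcp_feasible I c' \<longrightarrow> gcp_Q I c' \<le> gcp_Q I c)"

definition gcp_coeffs :: "('d::finite \<Rightarrow> nat) set \<Rightarrow> ('d \<Rightarrow> nat) \<Rightarrow> real" where
  "gcp_coeffs I = (SOME c. gcp_solution I c)"

definition u_gcp :: "(('d::finite \<Rightarrow> nat) \<Rightarrow> 'v::real_vector) \<Rightarrow> ('d \<Rightarrow> nat) set \<Rightarrow> 'v" where
  "u_gcp uu I = (\<Sum>i\<in>I. gcp_coeffs I i *\<^sub>R uu i)"

text \<open>Random-incidence distribution function of a Weibull renewal process.\<close>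
definition weibull_G :: "real \<Rightarrow> real \<Rightarrow> real \<Rightarrow> real" where
  "weibull_G lam kap t = 1 / (lam * Gamma (1 + 1/kap)) * integral {0..t} (\<lambda>x. exp (- ((x/lam) powr kap)))"

definition eps_n :: "nat \<Rightarrow> nat \<Rightarrow> real \<Rightarrow> real" where
  "eps_n d n s = 1/3 * (1/3)^d * (1/2)^(2*n) * s *
     (\<Sum>k=0..d-1. real ((n+d) choose k) * (1/3)^(d-1-k))"

end

theory Submission
  imports Defs "HOL-Library.Multiset"
begin


lemma finite_le_fun: "finite {j::'d::finite\<Rightarrow>nat. j \<le> i}"
proof -
  have "{j::'d\<Rightarrow>nat. j \<le> i} = PiE UNIV (\<lambda>k. {..i k})"
    by (auto simp: le_fun_def PiE_def Pi_def extensional_def)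
  thus ?thesis by (simp add: finite_PiE)
qed

lemma norm1_le_comp: "(j::'d::finite\<Rightarrow>nat) \<le> i \<Longrightarrow> j k \<le> i k"
  by (simp add: le_fun_def)

lemma finite_norm1_le: "finite {j::'d::finite\<Rightarrow>nat. norm1 j \<le> K}"
proof (rule finite_subset[OF _ finite_le_fun[of "\<lambda>_. K"]])
  show "{j::'d\<Rightarrow>nat. norm1 j \<le> K} \<subseteq> {j. j \<le> (\<lambda>_. K)}"
  proof (clarsimp simp: le_fun_def)
    fix j :: "'d\<Rightarrow>nat" and x assume "norm1 j \<le> K"
    have "j x \<le> norm1 j" unfolding norm1_def by (rule member_le_sum) auto
    with \<open>norm1 j \<le> K\<close> show "j x \<le> K" by simp
  qed
qed

lemma card_norm1_eq: "card {j::'d::finite\<Rightarrow>nat. norm1 j = k} = (CARD('d) + k - 1) choose k"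
proof -
  have "card (multisets_of_size (UNIV::'d set) k) = (CARD('d) + k - 1) choose k"
    by (rule card_multisets_of_size) simp
  moreover have "count ` multisets_of_size (UNIV::'d set) k = {j::'d\<Rightarrow>nat. norm1 j = k}"
  proof -
    have sz: "size M = norm1 (count M)" for M :: "'d multiset"
    proof -
      have "size M = sum (count M) (set_mset M)" by (simp add: size_multiset_overloaded_eq)
      also have "\<dots> = sum (count M) UNIV"
        by (rule sum.mono_neutral_left) (auto simp: not_in_iff)
      finally show ?thesis by (simp add: norm1_def)
    qed
    show ?thesis
    proof (rule set_eqI, rule iffI)
      fix j assume "j \<in> count ` multisets_of_size (UNIV::'d set) k"
      thus "j \<in> {j. norm1 j = k}" by (auto simp: multisets_of_size_def sz)
    next
      fix j :: "'d \<Rightarrow> nat" assume "j \<in> {j. norm1 j = k}"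
      moreover have "count (Abs_multiset j) = j" by (rule count_Abs_multiset) simp
      ultimately show "j \<in> count ` multisets_of_size (UNIV::'d set) k"
        by (auto simp: multisets_of_size_def sz intro!: image_eqI[of _ _ "Abs_multiset j"])
    qed
  qed
  moreover have "inj_on count (multisets_of_size (UNIV::'d set) k)"
    by (meson count_inject injI inj_on_subset subset_UNIV)
  ultimately show ?thesis by (metis card_image)
qed



definition Ep :: "nat \<Rightarrow> nat \<Rightarrow> real" where
  "Ep d k = 1/3 * (1/4)^k * (\<Sum>m=0..d-1. real ((k+d) choose m) * (1/3)^(d-1-m))"

definition aa :: "nat \<Rightarrow> nat \<Rightarrow> real" where
  "aa N e = (\<Sum>m=0..e. real (N choose m) * 3^m)"

lemma aa_rec: "4 * aa N e - aa (Suc N) e = 3^(Suc e) * real (N choose e)"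
proof (induction e)
  case 0 thus ?case by (simp add: aa_def)
next
  case (Suc e)
  have "aa N (Suc e) = aa N e + real (N choose Suc e) * 3^Suc e" by (simp add: aa_def)
  moreover have "aa (Suc N) (Suc e) = aa (Suc N) e + real (Suc N choose Suc e) * 3^Suc e" by (simp add: aa_def)
  moreover have "real (Suc N choose Suc e) = real (N choose e) + real (N choose Suc e)" by simp
  ultimately show ?case using Suc.IH by (simp add: algebra_simps)
qed

lemma Ep_aa: "Ep (Suc e) k = 1/3 * (1/4)^k * (1/3)^e * aa (k + Suc e) e"
proof -
  have "(\<Sum>m=0..e. real ((k+Suc e) choose m) * (1/3)^(e-m)) = (1/3)^e * aa (k + Suc e) e"
    unfolding aa_def sum_distrib_left
  proof (rule sum.cong[OF refl])
    fix m assume "m \<in> {0..e}"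
    hence "(1/3::real)^(e-m) = (1/3)^e * 3^m" by (simp add: power_diff field_simps)
    thus "real ((k+Suc e) choose m) * (1/3)^(e-m) = (1/3)^e * (real ((k+Suc e) choose m) * 3^m)" by simp
  qed
  thus ?thesis by (simp add: Ep_def)
qed

lemma Ep_step: assumes "d \<ge> 1" shows "Ep d k - Ep d (Suc k) = (1/4)^(Suc k) * real ((k+d) choose (d-1))"
proof -
  obtain e where d: "d = Suc e" using assms by (cases d) auto
  have "Ep d k - Ep d (Suc k) = 1/3 * (1/4)^(Suc k) * (1/3)^e * (4 * aa (k+Suc e) e - aa (Suc (k + Suc e)) e)"
    by (simp add: d Ep_aa algebra_simps)
  also have "\<dots> = 1/3 * (1/4)^(Suc k) * (1/3)^e * (3^(Suc e) * real ((k+Suc e) choose e))" by (simp only: aa_rec)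
  also have "\<dots> = (1/4)^(Suc k) * real ((k+Suc e) choose e)" by (simp add: field_simps)
  finally show ?thesis by (simp add: d)
qed

lemma Ep_nonneg: "Ep d k \<ge> 0" by (simp add: Ep_def sum_nonneg)

lemma Ep_telescope: assumes "d \<ge> 1"
  shows "(\<Sum>k\<in>{n<..n+m}. (1/4)^k * real ((k+d-1) choose k)) = Ep d n - Ep d (n+m)"
proof (induction m)
  case 0 thus ?case by simp
next
  case (Suc m)
  have "{n<..n+Suc m} = insert (Suc (n+m)) {n<..n+m}" by auto
  hence "(\<Sum>k\<in>{n<..n+Suc m}. (1/4)^k * real ((k+d-1) choose k)) =
     (1/4)^Suc (n+m) * real ((Suc (n+m)+d-1) choose Suc (n+m)) + (Ep d n - Ep d (n+m))"
    using Suc.IH by simp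
  also have "real ((Suc (n+m)+d-1) choose Suc (n+m)) = real (((n+m)+d) choose (d-1))"
  proof -
    have e: "Suc (n+m)+d-1 = Suc (n+m) + (d-1)" using assms by simp
    have e2: "(n+m)+d = Suc (n+m) + (d-1)" using assms by simp
    show ?thesis unfolding e e2 by (subst binomial_symmetric[of "Suc (n+m)"]) auto
  qed
  finally show ?case using Ep_step[OF assms, of "n+m"] by simp
qed

lemma choose_le_Suc: "N choose k \<le> Suc N choose k"
  by (cases k) auto

lemma Ep_top: assumes "d \<ge> 1" shows "(1/4)^n * real ((n+d-1) choose n) \<le> 3 * Ep d n"
proof -
  have "real ((n+d-1) choose n) = real ((n+d-1) choose (d-1))"
  proof -
    have e: "n+d-1 = n + (d-1)" using assms by simp
    show ?thesis unfolding e by (subst binomial_symmetric[of n]) auto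
  qed
  also have "\<dots> \<le> real ((n+d) choose (d-1))" using choose_le_Suc[of "n+d-1" "d-1"] assms by simp
  also have "\<dots> = real ((n+d) choose (d-1)) * (1/3)^(d-1-(d-1))" by simp
  also have "\<dots> \<le> (\<Sum>m=0..d-1. real ((n+d) choose m) * (1/3)^(d-1-m))"
    by (rule member_le_sum[where f="\<lambda>m. real ((n+d) choose m) * (1/3)^(d-1-m)"]) auto
  finally show ?thesis by (simp add: Ep_def)
qed



lemma tail_finite_bound:
  fixes F :: "('d::finite \<Rightarrow> nat) set"
  assumes "finite F" "\<And>j. j \<in> F \<Longrightarrow> n < norm1 j"
  shows "(\<Sum>j\<in>F. (1/4::real)^norm1 j) \<le> Ep CARD('d) n"
proof -
  define K where "K = n + Max (insert 0 (norm1 ` F))"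
  define A where "A = {j::'d\<Rightarrow>nat. n < norm1 j \<and> norm1 j \<le> K}"
  have fA: "finite A" unfolding A_def by (rule finite_subset[OF _ finite_norm1_le[of K]]) auto
  have FA: "F \<subseteq> A"
  proof
    fix j assume "j \<in> F"
    hence "norm1 j \<le> Max (insert 0 (norm1 ` F))" using assms(1) by (intro Max_ge) auto
    thus "j \<in> A" using assms(2)[OF \<open>j \<in> F\<close>] by (auto simp: A_def K_def)
  qed
  have "(\<Sum>j\<in>F. (1/4::real)^norm1 j) \<le> (\<Sum>j\<in>A. (1/4::real)^norm1 j)"
    by (rule sum_mono2[OF fA FA]) auto
  also have "\<dots> = (\<Sum>k\<in>{n<..K}. \<Sum>j\<in>{x\<in>A. norm1 x = k}. (1/4::real)^norm1 j)"
    by (rule sum.group[symmetric]) (use fA in \<open>auto simp: A_def\<close>)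
  also have "\<dots> = (\<Sum>k\<in>{n<..K}. (1/4)^k * real ((k + CARD('d) - 1) choose k))"
  proof (rule sum.cong[OF refl])
    fix k assume "k \<in> {n<..K}"
    hence "{x\<in>A. norm1 x = k} = {j. norm1 j = k}" by (auto simp: A_def)
    thus "(\<Sum>j\<in>{x\<in>A. norm1 x = k}. (1/4::real)^norm1 j) = (1/4)^k * real ((k + CARD('d) - 1) choose k)"
      using card_norm1_eq[where 'd='d, of k] by (simp add: add.commute)
  qed
  also have "\<dots> = Ep CARD('d) n - Ep CARD('d) (n + (K - n))"
    using Ep_telescope[of "CARD('d)" n "K-n"] by (simp add: K_def)
  also have "\<dots> \<le> Ep CARD('d) n" using Ep_nonneg by simp
  finally show ?thesis .
qed



lemma alt_sum_Pow: assumes "finite A"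
  shows "(\<Sum>S\<in>{S. S \<subseteq> A}. (-1::real)^card S) = (if A = {} then 1 else 0)"
proof -
  have "(\<Prod>x\<in>A. (1::real) - 1) = (\<Sum>X\<in>Pow A. (-1) ^ card X * (\<Prod>x\<in>X. 1) * (\<Prod>x\<in>A-X. 1))"
    by (rule prod_diff_conv_sum[OF assms])
  hence "(\<Sum>S\<in>{S. S \<subseteq> A}. (-1::real)^card S) = (\<Prod>x\<in>A. (1::real) - 1)" by (simp add: Pow_def)
  also have "\<dots> = (if A = {} then 1 else 0)" using assms by auto
  finally show ?thesis .
qed

lemma mobius_surplus:
  fixes uu :: "('d::finite \<Rightarrow> nat) \<Rightarrow> 'v::real_vector"
  shows "(\<Sum>j\<in>{j. j \<le> i}. surplus uu j) = uu i"
proof -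
  let ?sub = "\<lambda>j S. (\<lambda>k. if k \<in> S then j k - 1 else j k) :: 'd \<Rightarrow> nat"
  let ?add = "\<lambda>m S. (\<lambda>k. if k \<in> S then m k + 1 else m k) :: 'd \<Rightarrow> nat"
  let ?P = "Sigma {j. j \<le> i} (\<lambda>j. {S. S \<subseteq> {k. 0 < j k}})"
  let ?Q = "Sigma {m. m \<le> i} (\<lambda>m. {S. S \<subseteq> {k. m k < i k}})"
  have "(\<Sum>j\<in>{j. j \<le> i}. surplus uu j) =
      (\<Sum>(j,S)\<in>?P. ((-1::real) ^ card S) *\<^sub>R uu (?sub j S))"
    unfolding surplus_def by (subst sum.Sigma) (auto simp: finite_le_fun)
  also have "\<dots> = (\<Sum>(m,S)\<in>?Q. ((-1::real) ^ card S) *\<^sub>R uu m)"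
  proof (rule sum.reindex_bij_witness[where i="\<lambda>(m,S). (?add m S, S)" and j="\<lambda>(j,S). (?sub j S, S)"])
    fix a assume "a \<in> ?P"
    thus "(case case a of (j, S) \<Rightarrow> (?sub j S, S) of (m, S) \<Rightarrow> (?add m S, S)) = a"
      by (cases a) (auto simp: fun_eq_iff subset_iff)
    show "(case a of (j, S) \<Rightarrow> (?sub j S, S)) \<in> ?Q"
    proof -
      obtain j S where a: "a = (j,S)" by (cases a)
      have h: "j \<le> i" "S \<subseteq> {k. 0 < j k}" using \<open>a \<in> ?P\<close> a by auto
      have "?sub j S \<le> i" using h(1) by (auto simp: le_fun_def intro: le_trans[OF diff_le_self])
      moreover have "S \<subseteq> {k. ?sub j S k < i k}"
      proof
        fix k assume "k \<in> S"
        hence "0 < j k" "j k \<le> i k" using h by (auto simp: le_fun_def)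
        thus "k \<in> {k. ?sub j S k < i k}" using \<open>k \<in> S\<close> by simp
      qed
      ultimately show ?thesis using a by simp
    qed
    show "(case case a of (j, S) \<Rightarrow> (?sub j S, S) of (m, S) \<Rightarrow> ((-1::real) ^ card S) *\<^sub>R uu m) =
        (case a of (j, S) \<Rightarrow> ((-1::real) ^ card S) *\<^sub>R uu (?sub j S))"
      by (cases a) auto
  next
    fix b assume "b \<in> ?Q"
    thus "(case case b of (m, S) \<Rightarrow> (?add m S, S) of (j, S) \<Rightarrow> (?sub j S, S)) = b"
      by (cases b) (auto simp: fun_eq_iff)
    show "(case b of (m, S) \<Rightarrow> (?add m S, S)) \<in> ?P"
      using \<open>b \<in> ?Q\<close> by (cases b) (auto simp: le_fun_def subset_iff Suc_le_eq)
  qed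
  also have "\<dots> = (\<Sum>m\<in>{m. m \<le> i}. (\<Sum>S\<in>{S. S \<subseteq> {k. m k < i k}}. (-1::real) ^ card S) *\<^sub>R uu m)"
    by (subst sum.Sigma[symmetric]) (auto simp: finite_le_fun scaleR_sum_left)
  also have "\<dots> = (\<Sum>m\<in>{m. m \<le> i}. (if m = i then 1 else 0) *\<^sub>R uu m)"
  proof (rule sum.cong[OF refl])
    fix m assume "m \<in> {m. m \<le> i}"
    hence "({k. m k < i k} = {}) = (m = i)" by (auto simp: le_fun_def fun_eq_iff order.order_iff_strict)
    thus "(\<Sum>S\<in>{S. S \<subseteq> {k. m k < i k}}. (-1::real) ^ card S) *\<^sub>R uu m = (if m = i then 1 else 0) *\<^sub>R uu m"
      by (simp add: alt_sum_Pow)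
  qed
  also have "\<dots> = (\<Sum>m\<in>{m. m \<le> i}. (if m = i then uu m else 0))"
    by (rule sum.cong) auto
  also have "\<dots> = uu i" by (simp add: finite_le_fun)
  finally show ?thesis .
qed



lemma norm1_mono: "(j::'d::finite\<Rightarrow>nat) \<le> i \<Longrightarrow> norm1 j \<le> norm1 i"
  unfolding norm1_def by (rule sum_mono) (simp add: le_fun_def)

lemma norm1_eq_le: assumes "(j::'d::finite\<Rightarrow>nat) \<le> i" "norm1 i \<le> norm1 j" shows "j = i"
proof (rule ccontr)
  assume "j \<noteq> i"
  then obtain k where "j k \<noteq> i k" by (auto simp: fun_eq_iff)
  hence "j k < i k" using assms(1) by (auto simp: le_fun_def order.order_iff_strict)
  hence "norm1 j < norm1 i" unfolding norm1_def
    by (intro sum_strict_mono_ex1) (use assms(1) in \<open>auto simp: le_fun_def\<close>)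
  thus False using assms(2) by simp
qed

lemma gcp_exists_w:
  fixes I :: "('d::finite \<Rightarrow> nat) set"
  assumes "finite I"
  shows "\<exists>c. (\<forall>j. j \<notin> I \<longrightarrow> c j = 0) \<and> (\<forall>i\<in>I. gcp_w I c i = v i)"
  using assms
proof (induction I rule: finite_ranking_induct[where f="\<lambda>i. - int (norm1 i)"])
  case empty thus ?case by auto
next
  case (insert x S)
  show ?case
  proof (cases "x \<in> S")
    case True thus ?thesis using insert by (simp add: insert_absorb)
  next
    case False
    obtain c0 where c0: "\<forall>j. j \<notin> S \<longrightarrow> c0 j = 0" "\<forall>i\<in>S. gcp_w S c0 i = v i" using insert by blast
    define c where "c = c0(x := v x - (\<Sum>j\<in>{j\<in>S. x \<le> j}. c0 j))"
    have notle: "\<not> i \<le> x" if "i \<in> S" for i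
    proof
      assume "i \<le> x"
      moreover have "norm1 x \<le> norm1 i" using insert.hyps(2)[OF that] by simp
      ultimately have "i = x" by (rule norm1_eq_le)
      thus False using that False by simp
    qed
    have "\<forall>j. j \<notin> insert x S \<longrightarrow> c j = 0" using c0 by (auto simp: c_def)
    moreover have "gcp_w (insert x S) c i = v i" if "i \<in> insert x S" for i
    proof (cases "i = x")
      case True
      have "{j \<in> insert x S. x \<le> j} = insert x {j\<in>S. x \<le> j}" by auto
      moreover have "(\<Sum>j\<in>{j\<in>S. x \<le> j}. c j) = (\<Sum>j\<in>{j\<in>S. x \<le> j}. c0 j)"
        by (rule sum.cong) (use False in \<open>auto simp: c_def\<close>)
      ultimately show ?thesis using True False insert.hyps(1) by (simp add: gcp_w_def c_def)
    next
      case F: False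
      hence iS: "i \<in> S" using that by simp
      have "{j \<in> insert x S. i \<le> j} = {j\<in>S. i \<le> j}" using notle[OF iS] by auto
      moreover have "(\<Sum>j\<in>{j\<in>S. i \<le> j}. c j) = (\<Sum>j\<in>{j\<in>S. i \<le> j}. c0 j)"
        by (rule sum.cong) (use False in \<open>auto simp: c_def\<close>)
      ultimately show ?thesis using c0(2) iS by (simp add: gcp_w_def)
    qed
    ultimately show ?thesis by blast
  qed
qed

definition is_down :: "('d::finite \<Rightarrow> nat) set \<Rightarrow> bool" where
  "is_down I \<longleftrightarrow> (\<forall>i j. j \<in> I \<longrightarrow> i \<le> j \<longrightarrow> i \<in> I)"

lemma downset_id: "is_down I \<Longrightarrow> downset I = I"
  unfolding downset_def is_down_def by auto

lemma gcp_coeffs_w: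
  fixes I :: "('d::finite \<Rightarrow> nat) set"
  assumes "finite I" "is_down I" "i \<in> I"
  shows "gcp_w I (gcp_coeffs I) i = 1"
proof -
  obtain cs where cs: "\<forall>j. j \<notin> I \<longrightarrow> cs j = 0" "\<forall>i\<in>I. gcp_w I cs i = 1"
    using gcp_exists_w[OF assms(1), of "\<lambda>_. 1"] by blast
  have D: "downset I = I" by (rule downset_id[OF assms(2)])
  have Qs: "gcp_Q I cs = (\<Sum>i\<in>I. (1/4::real) ^ norm1 i)" unfolding gcp_Q_def D
    by (rule sum.cong) (use cs in auto)
  have le: "gcp_Q I c \<le> gcp_Q I cs" if "gcp_feasible I c" for c
    unfolding Qs unfolding gcp_Q_def D
    by (rule sum_mono) (use that in \<open>auto simp: gcp_feasible_def D\<close>)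
  have "gcp_feasible I cs" using cs by (auto simp: gcp_feasible_def D)
  hence "gcp_solution I cs" using le by (auto simp: gcp_solution_def)
  hence sol: "gcp_solution I (gcp_coeffs I)" unfolding gcp_coeffs_def by (rule someI[where P="gcp_solution I"])
  let ?c = "gcp_coeffs I"
  show ?thesis
  proof (rule ccontr)
    assume ne: "gcp_w I ?c i \<noteq> 1"
    have fe: "\<forall>i\<in>I. gcp_w I ?c i \<in> {0,1}" using sol by (auto simp: gcp_solution_def gcp_feasible_def D)
    have "gcp_Q I ?c < gcp_Q I cs" unfolding Qs unfolding gcp_Q_def D
    proof (rule sum_strict_mono_ex1[OF assms(1)])
      show "\<forall>x\<in>I. (1/4) ^ norm1 x * gcp_w I ?c x \<le> (1/4::real) ^ norm1 x" using fe by auto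
      show "\<exists>a\<in>I. (1/4) ^ norm1 a * gcp_w I ?c a < (1/4::real) ^ norm1 a"
        using fe ne assms(3) by (intro bexI[of _ i]) auto
    qed
    moreover have "gcp_Q I cs \<le> gcp_Q I ?c" using sol \<open>gcp_feasible I cs\<close> by (auto simp: gcp_solution_def)
    ultimately show False by simp
  qed
qed

lemma u_gcp_down:
  fixes I :: "('d::finite \<Rightarrow> nat) set" and uu :: "('d \<Rightarrow> nat) \<Rightarrow> 'v::real_vector"
  assumes "finite I" "is_down I"
  shows "u_gcp uu I = (\<Sum>j\<in>I. surplus uu j)"
proof -
  let ?c = "gcp_coeffs I"
  have "u_gcp uu I = (\<Sum>i\<in>I. ?c i *\<^sub>R (\<Sum>j\<in>{j\<in>I. j \<le> i}. surplus uu j))"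
    unfolding u_gcp_def
  proof (rule sum.cong[OF refl])
    fix i assume "i \<in> I"
    hence "{j\<in>I. j \<le> i} = {j. j \<le> i}" using assms(2) by (auto simp: is_down_def)
    thus "?c i *\<^sub>R uu i = ?c i *\<^sub>R (\<Sum>j\<in>{j\<in>I. j \<le> i}. surplus uu j)" by (simp add: mobius_surplus)
  qed
  also have "\<dots> = (\<Sum>i\<in>I. \<Sum>j\<in>{j\<in>I. j \<le> i}. ?c i *\<^sub>R surplus uu j)" by (simp add: scaleR_sum_right)
  also have "\<dots> = (\<Sum>j\<in>I. \<Sum>i\<in>{i\<in>I. j \<le> i}. ?c i *\<^sub>R surplus uu j)"
    by (rule sum.swap_restrict[OF assms(1) assms(1)])
  also have "\<dots> = (\<Sum>j\<in>I. gcp_w I ?c j *\<^sub>R surplus uu j)" by (simp add: gcp_w_def scaleR_sum_left)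
  also have "\<dots> = (\<Sum>j\<in>I. surplus uu j)" by (rule sum.cong) (auto simp: gcp_coeffs_w[OF assms])
  finally show ?thesis .
qed



lemma powr_subadd:
  fixes a b k :: real
  assumes "0 \<le> a" "0 \<le> b" "0 < k" "k \<le> 1"
  shows "(a+b) powr k \<le> a powr k + b powr k"
proof (cases "a + b = 0")
  case True thus ?thesis using assms by simp
next
  case False
  hence s: "a + b > 0" using assms by simp
  have x1: "a/(a+b) \<le> (a/(a+b)) powr k"
    using powr_mono'[of k 1 "a/(a+b)"] assms s by simp
  have x2: "b/(a+b) \<le> (b/(a+b)) powr k"
    using powr_mono'[of k 1 "b/(a+b)"] assms s by simp
  have "a/(a+b) + b/(a+b) = 1" using s by (simp add: add_divide_distrib[symmetric])
  hence "1 \<le> (a/(a+b)) powr k + (b/(a+b)) powr k"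
    using x1 x2 by linarith
  hence "(a+b) powr k * 1 \<le> (a+b) powr k * ((a/(a+b)) powr k + (b/(a+b)) powr k)"
    by (rule mult_left_mono) simp
  also have "\<dots> = a powr k + b powr k"
    using s assms by (simp add: distrib_left powr_divide)
  finally show ?thesis by simp
qed

definition SS :: "real \<Rightarrow> real \<Rightarrow> real \<Rightarrow> real" where
  "SS lam kap x = exp (- ((x/lam) powr kap))"

lemma SS_cont: assumes "lam > 0" "kap > 0" "A \<subseteq> {0..}" shows "continuous_on A (SS lam kap)"
  unfolding SS_def
  by (intro continuous_intros continuous_on_powr') (use assms in auto)

lemma SS_int: assumes "lam > 0" "kap > 0" "0 \<le> a" shows "SS lam kap integrable_on {a..b}"
  by (rule integrable_continuous_interval[OF SS_cont]) (use assms in auto)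

lemma SS_pos: "SS lam kap x > 0" by (simp add: SS_def)

lemma SS_le1: assumes "lam > 0" "x \<ge> 0" shows "SS lam kap x \<le> 1"
  using assms by (simp add: SS_def)

lemma SS_mult: assumes "lam > 0" "0 < kap" "kap \<le> 1" "t \<ge> 0" "y \<ge> 0"
  shows "SS lam kap t * SS lam kap y \<le> SS lam kap (t + y)"
proof -
  have "((t+y)/lam) powr kap \<le> (t/lam) powr kap + (y/lam) powr kap"
    using powr_subadd[of "t/lam" "y/lam" kap] assms by (simp add: add_divide_distrib)
  thus ?thesis by (simp add: SS_def exp_add[symmetric])
qed

lemma SS_piece_bound:
  assumes lam: "lam > 0" and kap: "0 < kap" "kap \<le> 1" and a: "0 < a" "a \<le> R"
  shows "integral {a..R} (SS lam kap) \<le> lam * Gamma (1 + 1/kap)"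
proof -
  define g where "g x = (x/lam) powr kap" for x
  define g' where "g' x = kap/lam * (x/lam) powr (kap - 1)" for x
  define f where "f u = u powr (1/kap - 1) / exp u" for u :: real
  have ga: "g a > 0" using a lam by (simp add: g_def)
  have gmono: "g x \<le> g y" if "0 \<le> x" "x \<le> y" for x y
    using that lam kap by (simp add: g_def powr_mono2 divide_right_mono)
  have sub: "((\<lambda>x. g' x *\<^sub>R f (g x)) has_integral (integral {g a..g R} f)) {a..R}"
  proof (rule has_integral_substitution)
    show "a \<le> R" by fact
    show "g a \<le> g R" using a by (intro gmono) auto
    show "g ` {a..R} \<subseteq> {g a..g R}" using a by (auto intro!: gmono)
    show "continuous_on {g a..g R} f" unfolding f_def
      using ga by (intro continuous_intros) auto
    fix x assume x: "x \<in> {a..R}"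
    hence xp: "x > 0" using a by simp
    show "(g has_field_derivative g' x) (at x within {a..R})" unfolding g_def g'_def
      by (rule derivative_eq_intros refl | use xp lam in simp)+
  qed
  have eqi: "g' x *\<^sub>R f (g x) = kap/lam * SS lam kap x" if "x \<in> {a..R}" for x
  proof -
    have xp: "x/lam > 0" using that a lam by simp
    have "((x/lam) powr kap) powr (1/kap - 1) = (x/lam) powr (1 - kap)"
    proof -
      have "kap * (1/kap - 1) = 1 - kap" using kap by (simp add: field_simps)
      thus ?thesis by (simp add: powr_powr)
    qed
    hence "g' x * f (g x) = kap/lam * ((x/lam) powr (kap - 1) * (x/lam) powr (1 - kap)) / exp ((x/lam) powr kap)"
      by (simp add: g'_def f_def g_def)
    also have "(x/lam) powr (kap - 1) * (x/lam) powr (1 - kap) = 1"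
      using xp that a lam by (simp add: powr_add[symmetric])
    finally show ?thesis by (simp add: SS_def exp_minus field_simps)
  qed
  have "((\<lambda>x. kap/lam * SS lam kap x) has_integral (integral {g a..g R} f)) {a..R}"
    using sub by (rule has_integral_eq[rotated]) (use eqi in auto)
  hence "kap/lam * integral {a..R} (SS lam kap) = integral {g a..g R} f"
    using SS_int[OF lam kap(1), of a R] a by (metis integral_mult_right integral_unique)
  also have "\<dots> \<le> integral {0..} f"
  proof (rule integral_subset_le)
    show "{g a..g R} \<subseteq> {0..}" using ga by auto
    show "f integrable_on {g a..g R}" unfolding f_def
      by (rule integrable_continuous_interval) (use ga in \<open>intro continuous_intros; auto\<close>)
    show "f integrable_on {0..}" unfolding f_def using Gamma_integral_real[of "1/kap"] kap by (auto simp: integrable_on_def)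
    show "\<forall>x\<in>{0..}. 0 \<le> f x" by (simp add: f_def)
  qed
  also have "\<dots> = Gamma (1/kap)" unfolding f_def using Gamma_integral_real[of "1/kap"] kap
    by (simp add: integral_unique)
  finally have "integral {a..R} (SS lam kap) \<le> lam/kap * Gamma (1/kap)"
    using lam kap by (simp add: field_simps)
  also have "\<dots> = lam * Gamma (1 + 1/kap)"
  proof -
    have p: "1/kap > 0" using kap by simp
    have "1/kap \<notin> \<int>\<^sub>\<le>\<^sub>0" using p nonpos_Ints_nonpos by fastforce
    from Gamma_plus1[OF this] show ?thesis by (simp add: add.commute)
  qed
  finally show ?thesis .
qed



lemma mu_pos: "(lam::real) > 0 \<Longrightarrow> (kap::real) > 0 \<Longrightarrow> lam * Gamma (1 + 1/kap) > 0"
proof -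
  assume a: "lam > 0" "kap > 0"
  hence "1/kap > 0" by simp
  hence "1 + 1/kap > 0" by linarith
  hence "Gamma (1 + 1/kap) > 0" by (rule Gamma_real_pos)
  thus ?thesis using a by simp
qed

lemma aux_lin: "(x::real) \<le> a + m \<Longrightarrow> a \<le> (x - m)/2 \<Longrightarrow> m < x \<Longrightarrow> False"
proof -
  assume h: "x \<le> a + m" "a \<le> (x - m)/2" "m < x"
  from h(2) have "2*a \<le> x - m" by simp
  with h(1) h(3) show False by linarith
qed

lemma SS_L_bound:
  assumes lam: "lam > 0" and kap: "0 < kap" "kap \<le> 1" and R: "R \<ge> 0"
  shows "integral {0..R} (SS lam kap) \<le> lam * Gamma (1 + 1/kap)"
proof (rule ccontr)
  let ?mu = "lam * Gamma (1 + 1/kap)"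
  have mu: "?mu > 0" using mu_pos[OF lam kap(1)] .
  assume "\<not> ?thesis"
  hence gt: "integral {0..R} (SS lam kap) > ?mu" by simp
  have "R > 0"
  proof (rule ccontr)
    assume "\<not> R > 0" hence "R = 0" using R by simp
    thus False using gt mu by simp
  qed
  define a where "a = min R ((integral {0..R} (SS lam kap) - ?mu)/2)"
  have a: "0 < a" "a \<le> R" using \<open>R > 0\<close> gt by (auto simp: a_def)
  have "integral {0..R} (SS lam kap) = integral {0..a} (SS lam kap) + integral {a..R} (SS lam kap)"
    using Henstock_Kurzweil_Integration.integral_combine[where a=0 and c=a and b=R and f="SS lam kap"] a SS_int[OF lam kap(1), of 0 R] by simp
  also have "integral {0..a} (SS lam kap) \<le> integral {0..a} (\<lambda>_. 1::real)"
    by (rule integral_le) (use SS_int[OF lam kap(1)] SS_le1[OF lam] in auto)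
  also have "\<dots> = a" using a by simp
  also have "integral {a..R} (SS lam kap) \<le> ?mu" by (rule SS_piece_bound[OF lam kap a])
  finally have "integral {0..R} (SS lam kap) \<le> a + ?mu" by simp
  moreover have "a \<le> (integral {0..R} (SS lam kap) - ?mu)/2" unfolding a_def by (rule min.cobounded2)
  ultimately show False using gt aux_lin by blast
qed

lemma G_le:
  assumes lam: "lam > 0" and kap: "0 < kap" "kap \<le> 1" and t: "t \<ge> 0"
  shows "weibull_G lam kap t \<le> 1 - exp (- ((t/lam) powr kap))"
proof -
  let ?mu = "lam * Gamma (1 + 1/kap)"
  let ?S = "SS lam kap"
  let ?L = "\<lambda>R. integral {0..R} ?S"
  define Ls where "Ls = (SUP R\<in>{0..}. ?L R)"
  define It where "It = integral {0..t} ?S"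
  have mu: "?mu > 0" using mu_pos[OF lam kap(1)] .
  have bdd: "bdd_above (?L ` {0..})" using SS_L_bound[OF lam kap] by (auto intro!: bdd_aboveI)
  have key: "It + ?S t * ?L R \<le> Ls" if R: "R \<ge> 0" for R
  proof -
    have "?L (t+R) = It + integral {t..t+R} ?S"
      unfolding It_def using Henstock_Kurzweil_Integration.integral_combine[where a=0 and c=t and b="t+R" and f="?S"] t R SS_int[OF lam kap(1), of 0 "t+R"] by simp
    moreover have "integral {t..t+R} ?S = integral {0..R} (\<lambda>y. ?S (y + t))"
      using integral_shift_real_ivl[where a=t and c=t and b="t+R" and f="?S"] by simp
    moreover have "integral {0..R} (\<lambda>y. ?S t * ?S y) \<le> integral {0..R} (\<lambda>y. ?S (y + t))"
    proof (rule integral_le)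
      show "(\<lambda>y. ?S t * ?S y) integrable_on {0..R}"
        by (rule integrable_continuous_interval, intro continuous_intros SS_cont) (use lam kap in auto)
      show "(\<lambda>y. ?S (y + t)) integrable_on {0..R}"
        using integrable_shift_real_ivl[OF SS_int[OF lam kap(1), of t "t+R"], of t] t by simp
      fix y assume "y \<in> {0..R}"
      thus "?S t * ?S y \<le> ?S (y + t)" using SS_mult[OF lam kap t, of y] by (simp add: add.commute)
    qed
    moreover have "integral {0..R} (\<lambda>y. ?S t * ?S y) = ?S t * ?L R" by simp
    moreover have "?L (t+R) \<le> Ls" unfolding Ls_def by (rule cSUP_upper[OF _ bdd]) (use t R in auto)
    ultimately show ?thesis by linarith
  qed
  have St: "?S t > 0" by (rule SS_pos)
  define X where "X = (Ls - It) / ?S t"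
  have "(SUP R\<in>{0..}. ?L R) \<le> X"
  proof (rule cSUP_least)
    show "{0::real..} \<noteq> {}" by auto
    fix R :: real assume "R \<in> {0..}"
    thus "?L R \<le> X" unfolding X_def using key[of R] St by (simp add: field_simps)
  qed
  hence "Ls \<le> (Ls - It) / ?S t" by (simp add: Ls_def X_def)
  hence It_le: "It \<le> Ls * (1 - ?S t)" using St by (simp add: field_simps)
  have "Ls \<le> ?mu" unfolding Ls_def by (rule cSUP_least) (use SS_L_bound[OF lam kap] in auto)
  moreover have "1 - ?S t \<ge> 0" using SS_le1[OF lam t] by simp
  ultimately have "It \<le> ?mu * (1 - ?S t)" using It_le by (meson mult_right_mono order.trans)
  hence "It / ?mu \<le> 1 - ?S t" using mu by (simp add: pos_divide_le_eq mult.commute)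
  moreover have "weibull_G lam kap t = It / ?mu"
    by (simp add: weibull_G_def It_def SS_def[abs_def])
  ultimately show ?thesis by (simp add: SS_def)
qed

lemma G_mono:
  assumes lam: "lam > 0" and kap: "0 < kap" "kap \<le> 1" and t: "0 \<le> t" "t \<le> tn"
  shows "weibull_G lam kap t \<le> weibull_G lam kap tn"
proof -
  have "integral {0..t} (SS lam kap) \<le> integral {0..tn} (SS lam kap)"
    by (rule integral_subset_le) (use t SS_int[OF lam kap(1)] SS_pos in \<open>auto intro: less_imp_le\<close>)
  moreover have "lam * Gamma (1 + 1/kap) > 0" using mu_pos[OF lam kap(1)] .
  ultimately show ?thesis
    by (simp add: weibull_G_def SS_def[abs_def] divide_right_mono)
qed



lemma has_sum_norm_le:
  fixes f :: "'a \<Rightarrow> 'v::real_normed_vector"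
  assumes "(f has_sum S) A" "\<And>F. finite F \<Longrightarrow> F \<subseteq> A \<Longrightarrow> norm (sum f F) \<le> B"
  shows "norm S \<le> B"
proof -
  have "((\<lambda>F. norm (sum f F)) \<longlongrightarrow> norm S) (finite_subsets_at_top A)"
    using assms(1) unfolding has_sum_def by (rule tendsto_norm)
  moreover have "eventually (\<lambda>F. norm (sum f F) \<le> B) (finite_subsets_at_top A)"
    using assms(2) by (intro eventually_finite_subsets_at_top_weakI) auto
  ultimately show ?thesis by (rule tendsto_upperbound) simp
qed

theorem proposition3p2:
  fixes M :: "'w measure"
    and u :: "'v::banach"
    and uu :: "('d::finite \<Rightarrow> nat) \<Rightarrow> 'v"
    and s :: real
    and n :: nat
    and lam kap tn :: real
    and t :: "('d \<Rightarrow> nat) \<Rightarrow> real"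
    and U :: "('d \<Rightarrow> nat) \<Rightarrow> 'w \<Rightarrow> nat"
  assumes n_pos: "n \<ge> 1"
    and lam_pos: "lam > 0"
    and kap: "0 < kap" "kap \<le> 1"
    and s_nonneg: "0 \<le> s"
    and expansion: "(surplus uu has_sum u) UNIV"
    and surplus_bound: "\<And>j. norm (surplus uu j) \<le> (1/3) ^ CARD('d) * (1/4) ^ norm1 j * s"
    and tn: "0 \<le> tn"
    and t_range: "\<And>i. norm1 i = n \<Longrightarrow> 0 \<le> t i \<and> t i \<le> tn"
    and prob: "prob_space M"
    and U_meas: "\<And>i. norm1 i \<le> n \<Longrightarrow> U i \<in> measurable M (count_space UNIV)"
    and U_vals: "\<And>i \<omega>. norm1 i \<le> n \<Longrightarrow> \<omega> \<in> space M \<Longrightarrow> U i \<omega> \<in> {0, 1}"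
    and U_low: "\<And>i. norm1 i < n \<Longrightarrow> (AE \<omega> in M. U i \<omega> = 0)"
    and U_top: "\<And>i. norm1 i = n \<Longrightarrow> measure M {\<omega> \<in> space M. U i \<omega> = 1} = weibull_G lam kap (t i)"
  shows "integrable M (\<lambda>\<omega>. norm (u - u_gcp uu {i. norm1 i \<le> n \<and> U i \<omega> = 0}))
     \<and> (\<integral>\<omega>. norm (u - u_gcp uu {i. norm1 i \<le> n \<and> U i \<omega> = 0}) \<partial>M)
        \<le> eps_n CARD('d) n s * (1 + 3 * (1 - exp (- ((tn / lam) powr kap))))"
proof -
  interpret P: prob_space M by (rule prob)
  define d where "d = CARD('d)"
  define C where "C = (1/3::real)^d * s"
  define E where "E = Ep d n"
  define Fk where "Fk = 1 - exp (- ((tn / lam) powr kap))"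
  define In where "In = {i::'d\<Rightarrow>nat. norm1 i \<le> n}"
  define Top where "Top = {i::'d\<Rightarrow>nat. norm1 i = n}"
  define Low where "Low = {i::'d\<Rightarrow>nat. norm1 i < n}"
  define Ip where "Ip \<omega> = {i. norm1 i \<le> n \<and> U i \<omega> = 0}" for \<omega>
  define gv where "gv J = norm (u - u_gcp uu J)" for J
  define A where "A i = {\<omega>\<in>space M. U i \<omega> = 1}" for i
  define B where "B \<omega> = C * E + C * (1/4)^n * (\<Sum>i\<in>Top. indicator (A i) \<omega>)" for \<omega>
  have d1: "d \<ge> 1" by (simp add: d_def)
  have fIn: "finite In" unfolding In_def by (rule finite_norm1_le)
  have fTop: "finite Top" by (rule finite_subset[OF _ fIn]) (auto simp: Top_def In_def)
  have fLow: "finite Low" by (rule finite_subset[OF _ fIn]) (auto simp: Low_def In_def)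
  have C0: "C \<ge> 0" using s_nonneg by (simp add: C_def)
  have E0: "E \<ge> 0" by (simp add: E_def Ep_nonneg)
  have Fk0: "Fk \<ge> 0" by (simp add: Fk_def)
  have Zsets: "{\<omega>\<in>space M. U i \<omega> = c} \<in> sets M" if "norm1 i \<le> n" for i c
  proof -
    have "{\<omega>\<in>space M. U i \<omega> = c} = U i -` {c} \<inter> space M" by auto
    thus ?thesis using measurable_sets[OF U_meas[OF that], of "{c}"] by simp
  qed
  have Asets: "A i \<in> sets M" if "i \<in> Top" for i
    unfolding A_def using Zsets that by (simp add: Top_def)
  have Ip_meas: "Ip \<in> measurable M (count_space (Pow In))"
    unfolding measurable_count_space_eq2[OF finite_Pow_iff[THEN iffD2, OF fIn]]
  proof (intro conjI ballI)
    show "Ip \<in> space M \<rightarrow> Pow In" by (auto simp: Ip_def In_def)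
    fix J assume J: "J \<in> Pow In"
    have JI: "J \<subseteq> In" using J by simp
    have Ip2: "Ip \<omega> = {i\<in>In. U i \<omega> = 0}" for \<omega> by (simp add: Ip_def In_def)
    have iff: "Ip \<omega> = J \<longleftrightarrow> (\<forall>i\<in>In. (U i \<omega> = 0) = (i \<in> J))" for \<omega>
      unfolding Ip2 using JI by blast
    have "Ip -` {J} \<inter> space M = {\<omega>\<in>space M. \<forall>i\<in>In. (U i \<omega> = 0) = (i \<in> J)}"
      using iff by blast
    also have "\<dots> \<in> sets M"
    proof (rule sets.sets_Collect_finite_All[OF _ fIn])
      fix i assume i: "i \<in> In"
      show "{\<omega>\<in>space M. (U i \<omega> = 0) = (i \<in> J)} \<in> sets M"
      proof (cases "i \<in> J")
        case True thus ?thesis using Zsets[of i 0] i by (simp add: In_def)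
      next
        case False
        have "{\<omega>\<in>space M. (U i \<omega> = 0) = (i \<in> J)} = space M - {\<omega>\<in>space M. U i \<omega> = 0}"
          using False by auto
        thus ?thesis using Zsets[of i 0] i by (auto simp: In_def)
      qed
    qed
    finally show "Ip -` {J} \<inter> space M \<in> sets M" .
  qed
  have g_eq: "(\<lambda>\<omega>. norm (u - u_gcp uu {i. norm1 i \<le> n \<and> U i \<omega> = 0})) = (\<lambda>\<omega>. gv (Ip \<omega>))"
    by (simp add: gv_def Ip_def)
  have g_meas: "(\<lambda>\<omega>. gv (Ip \<omega>)) \<in> borel_measurable M"
    using measurable_comp[OF Ip_meas borel_measurable_count_space[of gv "Pow In"]] by (simp add: o_def)
  have g_int: "integrable M (\<lambda>\<omega>. gv (Ip \<omega>))"
  proof (rule P.integrable_const_bound[OF _ g_meas])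
    show "AE \<omega> in M. norm (gv (Ip \<omega>)) \<le> Max (gv ` Pow In)"
    proof (rule AE_I2)
      fix \<omega> assume "\<omega> \<in> space M"
      have "Ip \<omega> \<in> Pow In" by (auto simp: Ip_def In_def)
      hence "gv (Ip \<omega>) \<le> Max (gv ` Pow In)" using fIn by (intro Max_ge) auto
      thus "norm (gv (Ip \<omega>)) \<le> Max (gv ` Pow In)" by (simp add: gv_def)
    qed
  qed
  have AEgood: "AE \<omega> in M. \<forall>i\<in>Low. U i \<omega> = 0"
    by (rule AE_finite_allI[OF fLow]) (use U_low in \<open>auto simp: Low_def\<close>)
  have pw: "gv (Ip \<omega>) \<le> B \<omega>" if om: "\<omega> \<in> space M" and good: "\<forall>i\<in>Low. U i \<omega> = 0" for \<omega>
  proof -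
    let ?h = "surplus uu"
    have down: "is_down (Ip \<omega>)" unfolding is_down_def
    proof (intro allI impI)
      fix i j assume j: "j \<in> Ip \<omega>" and ij: "i \<le> j"
      have nj: "norm1 i \<le> norm1 j" by (rule norm1_mono[OF ij])
      show "i \<in> Ip \<omega>"
      proof (cases "norm1 i < n")
        case True thus ?thesis using good by (auto simp: Low_def Ip_def)
      next
        case False
        hence "norm1 j \<le> norm1 i" using j nj by (auto simp: Ip_def)
        hence "i = j" by (rule norm1_eq_le[OF ij])
        thus ?thesis using j by simp
      qed
    qed
    have fIp: "finite (Ip \<omega>)" by (rule finite_subset[OF _ fIn]) (auto simp: Ip_def In_def)
    have ug: "u_gcp uu (Ip \<omega>) = sum ?h (Ip \<omega>)" by (rule u_gcp_down[OF fIp down])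
    have hs: "(?h has_sum (u - sum ?h (Ip \<omega>))) (UNIV - Ip \<omega>)"
      by (rule has_sum_Diff[OF expansion has_sum_finite[OF fIp]]) simp
    have "norm (u - sum ?h (Ip \<omega>)) \<le> B \<omega>"
    proof (rule has_sum_norm_le[OF hs])
      fix F assume fF: "finite F" and FI: "F \<subseteq> UNIV - Ip \<omega>"
      have S1: "(\<Sum>j\<in>F. (1/4::real)^norm1 j) \<le> E + (\<Sum>j\<in>Top. (1/4)^n * indicator (A j) \<omega>)"
      proof -
        have "(\<Sum>j\<in>F. (1/4::real)^norm1 j) = (\<Sum>j\<in>F \<inter> {j. n < norm1 j}. (1/4)^norm1 j)
            + (\<Sum>j\<in>F - {j. n < norm1 j}. (1/4)^norm1 j)"
          by (rule sum.Int_Diff[OF fF])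
        also have "(\<Sum>j\<in>F \<inter> {j. n < norm1 j}. (1/4::real)^norm1 j) \<le> E"
          unfolding E_def d_def by (rule tail_finite_bound) (use fF in auto)
        also have "(\<Sum>j\<in>F - {j. n < norm1 j}. (1/4::real)^norm1 j)
            = (\<Sum>j\<in>F - {j. n < norm1 j}. (1/4)^n * indicator (A j) \<omega>)"
        proof (rule sum.cong[OF refl])
          fix j assume j: "j \<in> F - {j. n < norm1 j}"
          hence nz: "U j \<omega> \<noteq> 0" and le: "norm1 j \<le> n" using FI by (auto simp: Ip_def)
          have "norm1 j = n"
          proof (rule ccontr)
            assume "norm1 j \<noteq> n" hence jL: "j \<in> Low" using le by (simp add: Low_def)
            have "U j \<omega> = 0" using good jL by (rule bspec)
            thus False using nz by simp
          qed
          moreover note nz le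
          moreover have "U j \<omega> \<in> {0,1}" using U_vals[OF le om] .
          ultimately show "(1/4::real)^norm1 j = (1/4)^n * indicator (A j) \<omega>"
            using om by (auto simp: A_def)
        qed
        also have "\<dots> \<le> (\<Sum>j\<in>Top. (1/4)^n * indicator (A j) \<omega>)"
        proof (rule sum_mono2[OF fTop])
          show "F - {j. n < norm1 j} \<subseteq> Top"
          proof
            fix j assume j: "j \<in> F - {j. n < norm1 j}"
            hence nz: "U j \<omega> \<noteq> 0" and le: "norm1 j \<le> n" using FI by (auto simp: Ip_def)
            have "norm1 j = n"
            proof (rule ccontr)
              assume "norm1 j \<noteq> n" hence jL: "j \<in> Low" using le by (simp add: Low_def)
              have "U j \<omega> = 0" using good jL by (rule bspec)
              thus False using nz by simp
            qed
            thus "j \<in> Top" by (simp add: Top_def)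
          qed
        qed auto
        finally show ?thesis by simp
      qed
      have "norm (sum ?h F) \<le> (\<Sum>j\<in>F. norm (?h j))" by (rule norm_sum)
      also have "\<dots> \<le> (\<Sum>j\<in>F. C * (1/4)^norm1 j)"
        by (rule sum_mono) (use surplus_bound in \<open>simp add: C_def d_def mult_ac\<close>)
      also have "\<dots> = C * (\<Sum>j\<in>F. (1/4)^norm1 j)" by (simp add: sum_distrib_left)
      also have "\<dots> \<le> C * (E + (\<Sum>j\<in>Top. (1/4)^n * indicator (A j) \<omega>))" using S1 C0 by (rule mult_left_mono)
      also have "\<dots> = B \<omega>"
      proof -
        have "(\<Sum>j\<in>Top. (1/4::real)^n * indicator (A j) \<omega>) = (1/4)^n * (\<Sum>j\<in>Top. indicator (A j) \<omega>)"
          by (rule sum_distrib_left[symmetric])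
        thus ?thesis by (simp add: B_def distrib_left mult.assoc)
      qed
      finally show "norm (sum ?h F) \<le> B \<omega>" .
    qed
    thus ?thesis by (simp add: gv_def ug)
  qed
  have ind_int: "integrable M (indicator (A i) :: 'w \<Rightarrow> real)" if "i \<in> Top" for i
    by (rule integrable_real_indicator[OF Asets[OF that]]) (simp add: less_top[symmetric] P.emeasure_finite)
  have sum_int: "integrable M (\<lambda>\<omega>. \<Sum>i\<in>Top. indicator (A i) \<omega> :: real)"
    using ind_int by (intro Bochner_Integration.integrable_sum[where f="\<lambda>i. indicator (A i)"]) auto
  have B_int: "integrable M B"
    unfolding B_def
    by (intro Bochner_Integration.integrable_add P.integrable_const Bochner_Integration.integrable_mult_right sum_int)
  have int_le: "(\<integral>\<omega>. gv (Ip \<omega>) \<partial>M) \<le> (\<integral>\<omega>. B \<omega> \<partial>M)"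
    by (rule integral_mono_AE[OF g_int B_int]) (use AEgood pw in \<open>auto elim: AE_mp intro: AE_I2\<close>)
  have mA: "measure M (A i) \<le> Fk" if i: "i \<in> Top" for i
  proof -
    have "measure M (A i) = weibull_G lam kap (t i)" using U_top[of i] i by (simp add: A_def Top_def)
    also have "\<dots> \<le> weibull_G lam kap tn" using t_range[of i] i lam_pos kap by (intro G_mono) (auto simp: Top_def)
    also have "\<dots> \<le> Fk" unfolding Fk_def by (rule G_le[OF lam_pos kap tn])
    finally show ?thesis .
  qed
  have "(\<integral>\<omega>. B \<omega> \<partial>M) = C * E + C * (1/4)^n * (\<Sum>i\<in>Top. measure M (A i))"
  proof -
    have "(\<integral>\<omega>. B \<omega> \<partial>M) = (\<integral>\<omega>. C * E \<partial>M) + (\<integral>\<omega>. C * (1/4)^n * (\<Sum>i\<in>Top. indicator (A i) \<omega>) \<partial>M)"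
      unfolding B_def
      by (rule Bochner_Integration.integral_add[OF P.integrable_const Bochner_Integration.integrable_mult_right[OF sum_int]])
    also have "(\<integral>\<omega>. C * E \<partial>M) = C * E" by (simp add: P.prob_space)
    also have "(\<integral>\<omega>. C * (1/4)^n * (\<Sum>i\<in>Top. indicator (A i) \<omega>) \<partial>M) = C * (1/4)^n * (\<integral>\<omega>. (\<Sum>i\<in>Top. indicator (A i) \<omega>) \<partial>M)"
      by (rule integral_mult_right_zero)
    also have "(\<integral>\<omega>. (\<Sum>i\<in>Top. indicator (A i) \<omega> :: real) \<partial>M) = (\<Sum>i\<in>Top. (\<integral>\<omega>. (indicator (A i) \<omega> :: real) \<partial>M))"
      by (rule Bochner_Integration.integral_sum[where f="\<lambda>i. (indicator (A i) :: 'w \<Rightarrow> real)"]) (erule ind_int)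
    also have "\<dots> = (\<Sum>i\<in>Top. measure M (A i))"
      by (rule sum.cong[OF refl]) (simp add: A_def Int_absorb2 subset_iff)
    finally show ?thesis .
  qed
  also have "\<dots> \<le> C * E + C * (1/4)^n * (real (card Top) * Fk)"
  proof -
    have "(\<Sum>i\<in>Top. measure M (A i)) \<le> (\<Sum>i\<in>Top. Fk)" by (rule sum_mono) (rule mA)
    thus ?thesis using C0 by (simp add: mult_left_mono)
  qed
  also have "\<dots> \<le> C * E + C * (3 * E * Fk)"
  proof -
    have "(1/4)^n * real (card Top) \<le> 3 * E"
      using Ep_top[OF d1, of n] card_norm1_eq[where 'd='d, of n]
      by (simp add: Top_def E_def d_def add.commute)
    hence "(1/4)^n * real (card Top) * Fk \<le> 3 * E * Fk" using Fk0 by (rule mult_right_mono)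
    thus ?thesis using C0 by (simp add: mult_left_mono mult_ac)
  qed
  also have "\<dots> = eps_n CARD('d) n s * (1 + 3 * Fk)"
  proof -
    have "(1/2::real)^(2*n) = ((1/2)^2)^n" by (simp only: power_mult)
    hence "(1/2::real)^(2*n) = (1/4)^n" by (simp add: power2_eq_square)
    hence "eps_n CARD('d) n s = C * E" by (simp add: eps_n_def C_def E_def Ep_def d_def mult_ac)
    thus ?thesis by (simp add: algebra_simps)
  qed
  finally show ?thesis using g_int int_le by (simp add: g_eq Fk_def)
qed


end
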